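(* Let $R$ be an $F$-finite $F$-pure ring of prime characteristic $p$, let $\mathfrak a,J$ be ideals with $\mathfrak a\subseteq\sqrt J$, and let $\overline R=R/\mathcal P(J)$ with images $\overline{\mathfrak a},\overline J$. Then $\operatorname{ct}_J(\mathfrak a)\le\operatorname{ct}_{\overline J}(\overline{\mathfrak a})$. In particular, if $R$ is local (or standard graded) with (homogeneous) maximal ideal $\mathfrak m$ and $\overline R=R/\mathcal P(\mathfrak m)$, then $\operatorname{fpt}(\mathfrak a)\le\operatorname{fpt}(\overline{\mathfrak a})$.
   Context: $J_e=\{f\in R\mid \varphi(f^{1/p^e})\in J \text{ for all }\varphi\in\operatorname{Hom}_R(R^{1/p^e},R)\}$; $\mathcal P(J)=\bigcap_{s\in\mathbb N}J_s$ (Cartier core); $b^J_{\mathfrak a}(p^e)=\max\{t\in\mathbb N\mid\mathfrak a^t\not\subseteq J_e\}$ and $\operatorname{ct}_J(\mathfrak a)=\lim_{e\to\infty}b^J_{\mathfrak a}(p^e)/p^e$, with the analogous notions in $\overline R$; $\operatorname{fpt}(\mathfrak a)=\operatorname{ct}_{\mathfrak m}(\mathfrak a)$. *)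

theory Defs
  imports Complex_Main "HOL-Algebra.Algebra"
begin

text \<open>A p^{-e}-linear map \<phi> : R \<rightarrow> R is an element of
  Hom_R(R^{1/p^e}, R) written on R itself: \<phi>(f^{1/p^e}) corresponds to \<phi> f.\<close>

definition frob_linear :: "('a, 'b) ring_scheme \<Rightarrow> nat \<Rightarrow> nat \<Rightarrow> ('a \<Rightarrow> 'a) \<Rightarrow> bool" where
  "frob_linear R p e \<phi> \<longleftrightarrow>
     \<phi> \<in> carrier R \<rightarrow> carrier R \<and>
     (\<forall>x \<in> carrier R. \<forall>y \<in> carrier R. \<phi> (x \<oplus>\<^bsub>R\<^esub> y) = \<phi> x \<oplus>\<^bsub>R\<^esub> \<phi> y) \<and>
     (\<forall>r \<in> carrier R. \<forall>s \<in> carrier R.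
        \<phi> ((r [^]\<^bsub>R\<^esub> (p ^ e)) \<otimes>\<^bsub>R\<^esub> s) = r \<otimes>\<^bsub>R\<^esub> \<phi> s)"

definition frob_ideal :: "('a, 'b) ring_scheme \<Rightarrow> nat \<Rightarrow> 'a set \<Rightarrow> nat \<Rightarrow> 'a set" where
  "frob_ideal R p J e = {f \<in> carrier R. \<forall>\<phi>. frob_linear R p e \<phi> \<longrightarrow> \<phi> f \<in> J}"

definition cartier_core :: "('a, 'b) ring_scheme \<Rightarrow> nat \<Rightarrow> 'a set \<Rightarrow> 'a set" where
  "cartier_core R p J = (\<Inter>e. frob_ideal R p J e)"

fun ideal_power :: "('a, 'b) ring_scheme \<Rightarrow> 'a set \<Rightarrow> nat \<Rightarrow> 'a set" where
  "ideal_power R I 0 = carrier R"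
| "ideal_power R I (Suc n) = ideal_prod R I (ideal_power R I n)"

definition rad_ideal :: "('a, 'b) ring_scheme \<Rightarrow> 'a set \<Rightarrow> 'a set" where
  "rad_ideal R J = {x \<in> carrier R. \<exists>n::nat. x [^]\<^bsub>R\<^esub> n \<in> J}"

definition b_num :: "('a, 'b) ring_scheme \<Rightarrow> nat \<Rightarrow> 'a set \<Rightarrow> 'a set \<Rightarrow> nat \<Rightarrow> nat" where
  "b_num R p J a e = Max {t::nat. \<not> ideal_power R a t \<subseteq> frob_ideal R p J e}"

definition crit_thr :: "('a, 'b) ring_scheme \<Rightarrow> nat \<Rightarrow> 'a set \<Rightarrow> 'a set \<Rightarrow> real" where
  "crit_thr R p J a = lim (\<lambda>e. real (b_num R p J a e) / real p ^ e)"

definition fpt :: "('a, 'b) ring_scheme \<Rightarrow> nat \<Rightarrow> 'a set \<Rightarrow> 'a set \<Rightarrow> real" where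
  "fpt R p m a = crit_thr R p m a"

text \<open>F-finite: R is finitely generated as a module over R^p (i.e. F_*R is a finite R-module).\<close>
definition F_finite :: "('a, 'b) ring_scheme \<Rightarrow> nat \<Rightarrow> bool" where
  "F_finite R p \<longleftrightarrow> (\<exists>S \<subseteq> carrier R. finite S \<and>
     (\<forall>x \<in> carrier R. \<exists>c \<in> S \<rightarrow> carrier R.
        x = (\<Oplus>\<^bsub>R\<^esub> s \<in> S. (c s [^]\<^bsub>R\<^esub> p) \<otimes>\<^bsub>R\<^esub> s)))"

text \<open>F-pure; for F-finite rings this is equivalent to F-split, which is used here.\<close>
definition F_pure :: "('a, 'b) ring_scheme \<Rightarrow> nat \<Rightarrow> bool" where
  "F_pure R p \<longleftrightarrow> (\<exists>\<phi>. frob_linear R p 1 \<phi> \<and> \<phi> \<one>\<^bsub>R\<^esub> = \<one>\<^bsub>R\<^esub>)"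

definition quot_image :: "('a, 'b) ring_scheme \<Rightarrow> 'a set \<Rightarrow> 'a set \<Rightarrow> 'a set set" where
  "quot_image R P I = (\<lambda>x. a_r_coset R P x) ` I"

end

theory Submission
  imports Defs
begin



lemma frob_linearD:
  assumes "frob_linear R p e \<phi>"
  shows "\<And>x. x \<in> carrier R \<Longrightarrow> \<phi> x \<in> carrier R"
    and "\<And>x y. x \<in> carrier R \<Longrightarrow> y \<in> carrier R \<Longrightarrow> \<phi> (x \<oplus>\<^bsub>R\<^esub> y) = \<phi> x \<oplus>\<^bsub>R\<^esub> \<phi> y"
    and "\<And>r s. r \<in> carrier R \<Longrightarrow> s \<in> carrier R \<Longrightarrow>
        \<phi> ((r [^]\<^bsub>R\<^esub> (p ^ e)) \<otimes>\<^bsub>R\<^esub> s) = r \<otimes>\<^bsub>R\<^esub> \<phi> s"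
  using assms unfolding frob_linear_def by auto

lemma frob_linear_comp:
  fixes R (structure)
  assumes "cring R" "frob_linear R p s \<chi>" "frob_linear R p e \<phi>"
  shows "frob_linear R p (e + s) (\<chi> \<circ> \<phi>)"
proof -
  interpret cring R by fact
  note c = frob_linearD[OF assms(2)] and f = frob_linearD[OF assms(3)]
  show ?thesis unfolding frob_linear_def
  proof (intro conjI ballI)
    show "\<chi> \<circ> \<phi> \<in> carrier R \<rightarrow> carrier R" using c(1) f(1) by auto
  next
    fix x y assume "x \<in> carrier R" "y \<in> carrier R"
    then show "(\<chi> \<circ> \<phi>) (x \<oplus> y) = (\<chi> \<circ> \<phi>) x \<oplus> (\<chi> \<circ> \<phi>) y"
      using c f by simp
  next
    fix r x assume r: "r \<in> carrier R" and x: "x \<in> carrier R"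
    have "r [^] (p ^ (e + s)) = (r [^] (p ^ s)) [^] (p ^ e)"
      using r by (simp add: nat_pow_pow power_add mult.commute)
    then have "(\<chi> \<circ> \<phi>) (r [^] (p ^ (e + s)) \<otimes> x) = \<chi> (r [^] (p ^ s) \<otimes> \<phi> x)"
      using f(3)[of "r [^] (p ^ s)" x] r x by simp
    also have "\<dots> = r \<otimes> \<chi> (\<phi> x)" using c(3) f(1) r x by simp
    finally show "(\<chi> \<circ> \<phi>) (r [^] (p ^ (e + s)) \<otimes> x) = r \<otimes> (\<chi> \<circ> \<phi>) x" by simp
  qed
qed

lemma frob_linear_id:
  fixes R (structure)
  assumes "cring R" shows "frob_linear R p 0 id"
proof -
  interpret cring R by fact
  show ?thesis unfolding frob_linear_def by auto
qed

lemma frob_linear_iter: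
  assumes "cring R" "frob_linear R p 1 \<psi>" "\<psi> \<one>\<^bsub>R\<^esub> = \<one>\<^bsub>R\<^esub>"
  shows "frob_linear R p e (\<psi> ^^ e) \<and> (\<psi> ^^ e) \<one>\<^bsub>R\<^esub> = \<one>\<^bsub>R\<^esub>"
proof (induction e)
  case 0
  then show ?case using frob_linear_id[OF assms(1)] by (simp add: id_def)
next
  case (Suc e)
  have "frob_linear R p (1 + e) ((\<psi> ^^ e) \<circ> \<psi>)"
    using frob_linear_comp[OF assms(1) _ assms(2)] Suc by blast
  have "\<psi> ^^ Suc e = (\<psi> ^^ e) \<circ> \<psi>" by (rule funpow_Suc_right)
  show ?case unfolding \<open>\<psi> ^^ Suc e = (\<psi> ^^ e) \<circ> \<psi>\<close>
    using Suc assms(3) \<open>frob_linear R p (1 + e) ((\<psi> ^^ e) \<circ> \<psi>)\<close> by (simp add: o_def)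
qed

lemma frob_linear_zero:
  fixes R (structure)
  assumes "cring R" "frob_linear R p e \<phi>"
  shows "\<phi> \<zero>\<^bsub>R\<^esub> = \<zero>\<^bsub>R\<^esub>"
proof -
  interpret cring R by fact
  note f = frob_linearD[OF assms(2)]
  have "\<phi> \<zero> = \<phi> \<zero> \<oplus> \<phi> \<zero>" using f(2)[of \<zero> \<zero>] by simp
  then show ?thesis using f(1)[of \<zero>]
    by (metis add.l_cancel_one' zero_closed)
qed

lemma frob_linear_minus:
  fixes R (structure)
  assumes "cring R" "frob_linear R p e \<phi>" "x \<in> carrier R"
  shows "\<phi> (\<ominus>\<^bsub>R\<^esub> x) = \<ominus>\<^bsub>R\<^esub> \<phi> x"
proof -
  interpret cring R by fact
  note f = frob_linearD[OF assms(2)]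
  have "\<phi> x \<oplus> \<phi> (\<ominus> x) = \<zero>"
    using f(2)[of x "\<ominus> x"] assms(3) frob_linear_zero[OF assms(1,2)] by (simp add: r_neg)
  then show ?thesis using f(1) assms(3)
    by (metis add.inv_closed minus_equality a_comm)
qed

lemma ideal_crit:
  fixes R (structure)
  assumes "cring R" "I \<subseteq> carrier R" "\<zero> \<in> I"
    "\<And>x y. x \<in> I \<Longrightarrow> y \<in> I \<Longrightarrow> x \<oplus> y \<in> I"
    "\<And>x. x \<in> I \<Longrightarrow> \<ominus> x \<in> I"
    "\<And>x r. x \<in> I \<Longrightarrow> r \<in> carrier R \<Longrightarrow> r \<otimes> x \<in> I"
  shows "ideal I R"
proof -
  interpret cring R by fact
  have sg: "subgroup I (add_monoid R)"
    by (rule add.subgroupI) (use assms in \<open>auto simp: a_inv_def[symmetric]\<close>)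
  show ?thesis
    by (rule idealI[OF ring_axioms sg]) (use assms in \<open>auto simp: m_comm subsetD\<close>)
qed

lemma frob_ideal_ideal:
  fixes R (structure)
  assumes "cring R" "ideal K R"
  shows "ideal (frob_ideal R p K e) R"
proof -
  interpret cring R by fact
  interpret K: ideal K R by fact
  show ?thesis
  proof (rule ideal_crit[OF assms(1)])
    show "frob_ideal R p K e \<subseteq> carrier R" unfolding frob_ideal_def by auto
    show "\<zero> \<in> frob_ideal R p K e"
      unfolding frob_ideal_def using frob_linear_zero[OF assms(1)] K.zero_closed by (auto, metis)
  next
    fix x y assume x: "x \<in> frob_ideal R p K e" and y: "y \<in> frob_ideal R p K e"
    show "x \<oplus> y \<in> frob_ideal R p K e" unfolding frob_ideal_def
    proof (safe)
      show "x \<oplus> y \<in> carrier R" using x y unfolding frob_ideal_def by simp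
      fix \<phi> assume phi: "frob_linear R p e \<phi>"
      then show "\<phi> (x \<oplus> y) \<in> K" using frob_linearD(2)[OF phi, of x y] x y
        unfolding frob_ideal_def by auto
    qed
  next
    fix x assume x: "x \<in> frob_ideal R p K e"
    show "\<ominus> x \<in> frob_ideal R p K e" unfolding frob_ideal_def
    proof (safe)
      show "\<ominus> x \<in> carrier R" using x unfolding frob_ideal_def by simp
      fix \<phi> assume phi: "frob_linear R p e \<phi>"
      then show "\<phi> (\<ominus> x) \<in> K" using frob_linear_minus[OF assms(1) phi, of x] x
        unfolding frob_ideal_def by auto
    qed
  next
    fix a r assume a: "a \<in> frob_ideal R p K e" and r: "r \<in> carrier R"
    show "r \<otimes> a \<in> frob_ideal R p K e" unfolding frob_ideal_def
    proof (safe)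
      show "r \<otimes> a \<in> carrier R" using a r unfolding frob_ideal_def by simp
      fix \<phi> assume phi: "frob_linear R p e \<phi>"
      note f = frob_linearD[OF phi]
      have "frob_linear R p e (\<lambda>x. \<phi> (r \<otimes> x))" unfolding frob_linear_def
      proof (intro conjI ballI)
        show "(\<lambda>x. \<phi> (r \<otimes> x)) \<in> carrier R \<rightarrow> carrier R" using f(1) r by auto
      next
        fix x y assume "x \<in> carrier R" "y \<in> carrier R"
        then show "\<phi> (r \<otimes> (x \<oplus> y)) = \<phi> (r \<otimes> x) \<oplus> \<phi> (r \<otimes> y)"
          using f(2) r by (simp add: r_distr)
      next
        fix u s assume "u \<in> carrier R" "s \<in> carrier R"
        then show "\<phi> (r \<otimes> (u [^] p ^ e \<otimes> s)) = u \<otimes> \<phi> (r \<otimes> s)"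
        proof -
          assume us: "u \<in> carrier R" "s \<in> carrier R"
          have "r \<otimes> (u [^] p ^ e \<otimes> s) = u [^] p ^ e \<otimes> (r \<otimes> s)"
            using us r by (simp add: m_lcomm)
          then show ?thesis using f(3)[of u "r \<otimes> s"] us r by simp
        qed
      qed
      then show "\<phi> (r \<otimes> a) \<in> K" using a unfolding frob_ideal_def by blast
    qed
  qed
qed

lemma frob_ideal_0:
  assumes "cring R" shows "frob_ideal R p K 0 \<subseteq> K"
proof
  fix x assume "x \<in> frob_ideal R p K 0"
  then have "id x \<in> K" using frob_linear_id[OF assms, of p] unfolding frob_ideal_def by blast
  then show "x \<in> K" by simp
qed

lemma pow_in_frob_ideal:
  fixes R (structure)
  assumes "cring R" "ideal K R" "x \<in> carrier R" "x [^]\<^bsub>R\<^esub> M \<in> K"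
  shows "x [^]\<^bsub>R\<^esub> (M * p ^ e) \<in> frob_ideal R p K e"
proof -
  interpret cring R by fact
  interpret K: ideal K R by fact
  have "\<phi> (x [^] (M * p ^ e)) \<in> K" if phi: "frob_linear R p e \<phi>" for \<phi>
  proof -
    note f = frob_linearD[OF phi]
    have "x [^] (M * p ^ e) = (x [^] M) [^] (p ^ e) \<otimes> \<one>"
      using assms(3) by (simp add: nat_pow_pow)
    then have "\<phi> (x [^] (M * p ^ e)) = x [^] M \<otimes> \<phi> \<one>"
      using f(3)[of "x [^] M" \<one>] assms(3) by simp
    then show ?thesis using assms(4) f(1) K.I_r_closed by simp
  qed
  then show ?thesis unfolding frob_ideal_def using assms(3) by auto
qed

lemma frob_step:
  fixes R (structure)
  assumes "cring R" "frob_linear R p 1 \<psi>" "\<psi> \<one>\<^bsub>R\<^esub> = \<one>\<^bsub>R\<^esub>"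
    and "f \<in> carrier R" "f \<notin> frob_ideal R p K e"
  shows "f [^]\<^bsub>R\<^esub> p \<notin> frob_ideal R p K (Suc e)"
proof
  interpret cring R by fact
  assume a: "f [^] p \<in> frob_ideal R p K (Suc e)"
  from assms(5) assms(4) obtain \<phi> where phi: "frob_linear R p e \<phi>" "\<phi> f \<notin> K"
    unfolding frob_ideal_def by auto
  have "frob_linear R p (1 + e) (\<phi> \<circ> \<psi>)" by (rule frob_linear_comp[OF assms(1) phi(1) assms(2)])
  then have "frob_linear R p (Suc e) (\<phi> \<circ> \<psi>)" by simp
  then have "(\<phi> \<circ> \<psi>) (f [^] p) \<in> K" using a unfolding frob_ideal_def by blast
  moreover have "\<psi> (f [^] p) = f"
    using frob_linearD(3)[OF assms(2), of f \<one>] assms(3,4) by simp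
  ultimately show False using phi(2) by simp
qed




lemma ideal_prod_mono:
  assumes "I \<subseteq> I'" "J \<subseteq> J'"
  shows "ideal_prod R I J \<subseteq> ideal_prod R I' J'"
proof
  fix x assume "x \<in> ideal_prod R I J"
  then show "x \<in> ideal_prod R I' J'"
    by (induct x rule: ideal_prod.induct) (use assms in \<open>auto intro: ideal_prod.intros\<close>)
qed

lemma ip_mono:
  assumes "A \<subseteq> B" shows "ideal_power R A t \<subseteq> ideal_power R B t"
proof (induction t)
  case 0 show ?case by simp
next
  case (Suc t) then show ?case using ideal_prod_mono[OF assms Suc.IH, of R] by simp
qed

lemma ip_ideal:
  fixes R (structure)
  assumes "cring R" "ideal A R" shows "ideal (ideal_power R A t) R"
proof -
  interpret cring R by fact
  show ?thesis by (induction t) (auto simp: oneideal ideal_prod_is_ideal assms(2))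
qed



lemma ip_decr1:
  fixes R (structure)
  assumes "cring R" "ideal A R" shows "ideal_power R A (Suc t) \<subseteq> ideal_power R A t"
proof -
  interpret cring R by fact
  show ?thesis using ideal_prod_inter[OF assms(2) ip_ideal[OF assms, of t]] by auto
qed

lemma ip_decr:
  fixes R (structure)
  assumes "cring R" "ideal A R" "s \<le> t" shows "ideal_power R A t \<subseteq> ideal_power R A s"
  using assms(3)
proof (induction t)
  case 0 then show ?case by simp
next
  case (Suc t)
  show ?case
  proof (cases "s = Suc t")
    case True then show ?thesis by simp
  next
    case False
    then have "s \<le> t" using Suc.prems by simp
    then show ?thesis using Suc.IH ip_decr1[OF assms(1,2), of t] by blast
  qed
qed

lemma ip_mult:
  fixes R (structure)
  assumes "cring R" "ideal A R"
  shows "x \<in> ideal_power R A s \<Longrightarrow> y \<in> ideal_power R A t \<Longrightarrow> x \<otimes> y \<in> ideal_power R A (s + t)"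
proof (induction s arbitrary: x)
  case 0
  interpret cring R by fact
  interpret I: ideal "ideal_power R A t" R by (rule ip_ideal[OF assms])
  show ?case using 0 I.I_l_closed by simp
next
  case (Suc s)
  interpret cring R by fact
  interpret I: ideal "ideal_power R A (s + t)" R by (rule ip_ideal[OF assms])
  interpret A: ideal A R by fact
  have "x \<in> ideal_prod R A (ideal_power R A s)" using Suc.prems by simp
  then have "x \<otimes> y \<in> ideal_prod R A (ideal_power R A (s + t))"
  proof (induct x rule: ideal_prod.induct)
    case (prod i j)
    have "i \<in> carrier R" using prod(1) A.Icarr by blast
    moreover have "j \<in> carrier R" using prod(2) ideal.Icarr[OF ip_ideal[OF assms, of s]] by blast
    moreover have "y \<in> carrier R" using Suc.prems(2) ideal.Icarr[OF ip_ideal[OF assms, of t]] by blast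
    ultimately have "i \<otimes> j \<otimes> y = i \<otimes> (j \<otimes> y)" by (simp add: m_assoc)
    have "j \<otimes> y \<in> ideal_power R A (s + t)" using Suc.IH[OF prod(2) Suc.prems(2)] .
    then have "i \<otimes> (j \<otimes> y) \<in> ideal_prod R A (ideal_power R A (s + t))"
      using prod(1) by (rule ideal_prod.prod[rotated])
    then show ?case using \<open>i \<otimes> j \<otimes> y = i \<otimes> (j \<otimes> y)\<close> by simp
  next
    case (sum s1 s2)
    have c: "s1 \<in> carrier R" "s2 \<in> carrier R" "y \<in> carrier R"
      using sum(1) sum(3) ideal_prod_in_carrier[OF assms(2) ip_ideal[OF assms, of s]] apply blast
      using sum(1) sum(3) ideal_prod_in_carrier[OF assms(2) ip_ideal[OF assms, of s]] apply blast
      using Suc.prems(2) ideal.Icarr[OF ip_ideal[OF assms, of t]] by blast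
    then have "(s1 \<oplus> s2) \<otimes> y = s1 \<otimes> y \<oplus> s2 \<otimes> y" by (simp add: l_distr)
    then show ?case using ideal_prod.sum[OF sum(2) sum(4)] by simp
  qed
  then show ?case by simp
qed

lemma ip_pow:
  fixes R (structure)
  assumes "cring R" "ideal A R" "x \<in> ideal_power R A t"
  shows "x [^] n \<in> ideal_power R A (n * t)"
proof -
  interpret cring R by fact
  have xc: "x \<in> carrier R" using assms(3) ideal.Icarr[OF ip_ideal[OF assms(1,2)]] by blast
  show ?thesis
  proof (induction n)
    case 0
    have "x [^] (0::nat) = \<one>" by (rule nat_pow_0)
    then show ?case by simp
  next
    case (Suc n)
    have eq: "x [^] Suc n = x [^] n \<otimes> x" by (rule nat_pow_Suc)
    have "x [^] n \<otimes> x \<in> ideal_power R A (n * t + t)" by (rule ip_mult[OF assms(1,2) Suc assms(3)])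
    moreover have "n * t + t = Suc n * t" by simp
    ultimately show ?case using eq by metis
  qed
qed



lemma ip_binom:
  fixes R (structure)
  assumes "cring R" "ideal A R" "ideal B R"
  shows "ideal_power R (A <+>\<^bsub>R\<^esub> B) (s + t) \<subseteq> ideal_power R A s <+>\<^bsub>R\<^esub> ideal_power R B t"
proof -
  interpret cring R by fact
  have AB: "ideal (A <+>\<^bsub>R\<^esub> B) R" by (rule add_ideals[OF assms(2,3)])
  have sum_ideal: "ideal (ideal_power R A s <+>\<^bsub>R\<^esub> ideal_power R B t) R" for s t
    by (rule add_ideals[OF ip_ideal[OF assms(1,2)] ip_ideal[OF assms(1,3)]])
  have carr_sub: "U \<subseteq> carrier R \<Longrightarrow> ideal V R \<Longrightarrow> U \<subseteq> carrier R <+>\<^bsub>R\<^esub> V" for U V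
  proof
    fix x assume "U \<subseteq> carrier R" "ideal V R" "x \<in> U"
    then have "x = x \<oplus> \<zero>" "x \<in> carrier R" "\<zero> \<in> V"
      by (auto simp: additive_subgroup.zero_closed ideal.axioms(1))
    then show "x \<in> carrier R <+>\<^bsub>R\<^esub> V" unfolding set_add_def' by blast
  qed
  have carr_sub2: "U \<subseteq> carrier R \<Longrightarrow> ideal V R \<Longrightarrow> U \<subseteq> V <+>\<^bsub>R\<^esub> carrier R" for U V
  proof
    fix x assume "U \<subseteq> carrier R" "ideal V R" "x \<in> U"
    then have "x = \<zero> \<oplus> x" "x \<in> carrier R" "\<zero> \<in> V"
      by (auto simp: additive_subgroup.zero_closed ideal.axioms(1))
    then show "x \<in> V <+>\<^bsub>R\<^esub> carrier R" unfolding set_add_def' by blast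
  qed
  have PAB: "ideal (ideal_power R (A <+>\<^bsub>R\<^esub> B) n) R" for n by (rule ip_ideal[OF assms(1) AB])
  have "\<forall>s t. s + t = n \<longrightarrow> ideal_power R (A <+>\<^bsub>R\<^esub> B) n \<subseteq> ideal_power R A s <+>\<^bsub>R\<^esub> ideal_power R B t" for n
  proof (induction n)
    case 0
    then show ?case using carr_sub[of "carrier R" "carrier R"] oneideal by simp
  next
    case (Suc n)
    show ?case
    proof (intro allI impI)
      fix s t assume st: "s + t = Suc n"
      show "ideal_power R (A <+>\<^bsub>R\<^esub> B) (Suc n) \<subseteq> ideal_power R A s <+>\<^bsub>R\<^esub> ideal_power R B t"
      proof (cases "s = 0 \<or> t = 0")
        case True
        have sub: "ideal_power R (A <+>\<^bsub>R\<^esub> B) (Suc n) \<subseteq> carrier R"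
          using ideal.Icarr[OF PAB[of "Suc n"]] by blast
        from True show ?thesis
        proof
          assume "s = 0"
          then show ?thesis using carr_sub[OF sub ip_ideal[OF assms(1,3)], of t] by (simp only: ideal_power.simps(1))
        next
          assume "t = 0"
          then show ?thesis using carr_sub2[OF sub ip_ideal[OF assms(1,2)], of s] by (simp only: ideal_power.simps(1))
        qed
      next
        case False
        then obtain s' t' where s': "s = Suc s'" and t': "t = Suc t'" by (meson not0_implies_Suc)
        have IH1: "ideal_power R (A <+>\<^bsub>R\<^esub> B) n \<subseteq> ideal_power R A s' <+>\<^bsub>R\<^esub> ideal_power R B t"
          using Suc.IH st s' by auto
        have IH2: "ideal_power R (A <+>\<^bsub>R\<^esub> B) n \<subseteq> ideal_power R A s <+>\<^bsub>R\<^esub> ideal_power R B t'"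
          using Suc.IH st t' by auto
        interpret T: ideal "ideal_power R A s <+>\<^bsub>R\<^esub> ideal_power R B t" R by (rule sum_ideal)
        interpret PA: ideal "ideal_power R A s" R by (rule ip_ideal[OF assms(1,2)])
        interpret PB: ideal "ideal_power R B t" R by (rule ip_ideal[OF assms(1,3)])
        interpret PA': ideal "ideal_power R A s'" R by (rule ip_ideal[OF assms(1,2)])
        interpret PB': ideal "ideal_power R B t'" R by (rule ip_ideal[OF assms(1,3)])
        interpret A: ideal A R by fact
        interpret B: ideal B R by fact
        have inA: "x \<in> ideal_power R A s <+>\<^bsub>R\<^esub> ideal_power R B t" if "x \<in> ideal_power R A s" for x
        proof -
          have "x = x \<oplus> \<zero>" using PA.Icarr[OF that] by simp
          then show ?thesis using that PB.zero_closed unfolding set_add_def' by blast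
        qed
        have inB: "x \<in> ideal_power R A s <+>\<^bsub>R\<^esub> ideal_power R B t" if "x \<in> ideal_power R B t" for x
        proof -
          have "x = \<zero> \<oplus> x" using PB.Icarr[OF that] by simp
          then show ?thesis using that PA.zero_closed unfolding set_add_def' by blast
        qed
        have key: "i \<otimes> j \<in> ideal_power R A s <+>\<^bsub>R\<^esub> ideal_power R B t"
          if i: "i \<in> A <+>\<^bsub>R\<^esub> B" and j: "j \<in> ideal_power R (A <+>\<^bsub>R\<^esub> B) n" for i j
        proof -
          obtain a b where ab: "a \<in> A" "b \<in> B" "i = a \<oplus> b" using i unfolding set_add_def' by blast
          obtain a1 b1 where ab1: "a1 \<in> ideal_power R A s'" "b1 \<in> ideal_power R B t" "j = a1 \<oplus> b1"
            using IH1 j unfolding set_add_def' by blast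
          obtain a2 b2 where ab2: "a2 \<in> ideal_power R A s" "b2 \<in> ideal_power R B t'" "j = a2 \<oplus> b2"
            using IH2 j unfolding set_add_def' by blast
          have c: "a \<in> carrier R" "b \<in> carrier R" "a1 \<in> carrier R" "b1 \<in> carrier R"
            "a2 \<in> carrier R" "b2 \<in> carrier R"
            using ab ab1 ab2 A.Icarr B.Icarr PA'.Icarr PB.Icarr PA.Icarr PB'.Icarr by auto
          have jc: "j \<in> carrier R" using ab1(3) c by simp
          have e1: "i \<otimes> j = a \<otimes> j \<oplus> b \<otimes> j" using ab(3) c jc by (simp add: l_distr)
          have e2: "a \<otimes> j = a \<otimes> a1 \<oplus> a \<otimes> b1" using ab1(3) c by (simp add: r_distr)
          have e3: "b \<otimes> j = b \<otimes> a2 \<oplus> b \<otimes> b2" using ab2(3) c by (simp add: r_distr)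
          have "i \<otimes> j = (a \<otimes> a1 \<oplus> a \<otimes> b1) \<oplus> (b \<otimes> a2 \<oplus> b \<otimes> b2)"
            using e1 e2 e3 by simp
          moreover have "a \<otimes> a1 \<in> ideal_power R A s" using s' ab(1) ab1(1) by (simp add: ideal_prod.prod)
          moreover have "b \<otimes> b2 \<in> ideal_power R B t" using t' ab(2) ab2(2) by (simp add: ideal_prod.prod)
          moreover have "a \<otimes> b1 \<in> ideal_power R B t" using ab1(2) c PB.I_l_closed by simp
          moreover have "b \<otimes> a2 \<in> ideal_power R A s" using ab2(1) c PA.I_l_closed by simp
          ultimately show ?thesis using T.a_closed[OF T.a_closed[OF inA inB] T.a_closed[OF inA inB]] by simp
        qed
        have "x \<in> ideal_prod R (A <+>\<^bsub>R\<^esub> B) (ideal_power R (A <+>\<^bsub>R\<^esub> B) n) \<Longrightarrow>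
                x \<in> ideal_power R A s <+>\<^bsub>R\<^esub> ideal_power R B t" for x
          by (induct x rule: ideal_prod.induct) (use key T.a_closed in auto)
        then show ?thesis by auto
      qed
    qed
  qed
  then show ?thesis by blast
qed



lemma ip_pidl:
  fixes R (structure)
  assumes "cring R" "x \<in> carrier R"
  shows "ideal_power R (PIdl x) m \<subseteq> PIdl (x [^] m)"
proof (induction m)
  case 0
  interpret cring R by fact
  show ?case
  proof
    fix y assume "y \<in> ideal_power R (PIdl x) 0"
    then have yc: "y \<in> carrier R" by simp
    then have "y = y \<otimes> x [^] (0::nat)" by simp
    then show "y \<in> PIdl (x [^] (0::nat))" unfolding cgenideal_def using yc by blast
  qed
next
  case (Suc m)
  interpret cring R by fact
  interpret I: ideal "PIdl (x [^] Suc m)" R by (rule cgenideal_ideal) (simp add: assms(2))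
  have "y \<in> PIdl (x [^] Suc m)" if "y \<in> ideal_prod R (PIdl x) (ideal_power R (PIdl x) m)" for y
    using that
  proof (induct y rule: ideal_prod.induct)
    case (prod i j)
    obtain u where u: "u \<in> carrier R" "i = u \<otimes> x" using prod(1) unfolding cgenideal_def by blast
    have "j \<in> PIdl (x [^] m)" using prod(2) Suc.IH by (rule subsetD[rotated])
    then obtain v where v: "v \<in> carrier R" "j = v \<otimes> x [^] m" unfolding cgenideal_def by blast
    have xm: "x [^] m \<in> carrier R" using assms(2) by simp
    have "i \<otimes> j = (u \<otimes> x) \<otimes> (v \<otimes> x [^] m)" by (simp only: u(2) v(2))
    also have "\<dots> = u \<otimes> (x \<otimes> (v \<otimes> x [^] m))" by (rule m_assoc) (simp_all add: u(1) v(1) assms(2) xm)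
    also have "x \<otimes> (v \<otimes> x [^] m) = v \<otimes> (x \<otimes> x [^] m)" by (rule m_lcomm) (simp_all add: v(1) assms(2) xm)
    also have "u \<otimes> (v \<otimes> (x \<otimes> x [^] m)) = (u \<otimes> v) \<otimes> (x \<otimes> x [^] m)"
      by (rule m_assoc[symmetric]) (simp_all add: u(1) v(1) assms(2) xm)
    also have "x \<otimes> x [^] m = x [^] Suc m" using assms(2) by (rule nat_pow_Suc2[symmetric])
    finally have "i \<otimes> j = (u \<otimes> v) \<otimes> x [^] Suc m" .
    then show ?case using u v unfolding cgenideal_def by blast
  next
    case (sum s1 s2) then show ?case using I.a_closed by simp
  qed
  then show ?case by auto
qed



lemma ip_pigeon:
  fixes R (structure)
  assumes "cring R" "ideal K R" "finite G"
  shows "G \<subseteq> carrier R \<Longrightarrow> (\<forall>g\<in>G. g [^] m \<in> K) \<Longrightarrow> ideal_power R (Idl G) (card G * m + 1) \<subseteq> K"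
  using assms(3)
proof (induction G rule: finite_induct)
  case empty
  interpret cring R by fact
  interpret K: ideal K R by fact
  have "Idl {} \<subseteq> K" by (rule genideal_minimal[OF assms(2)]) simp
  then show ?case using ideal_prod_inter[OF genideal_ideal[of "{}"] oneideal] by auto
next
  case (insert g G)
  interpret cring R by fact
  interpret K: ideal K R by fact
  have g: "g \<in> carrier R" and G: "G \<subseteq> carrier R" using insert.prems by auto
  have iP: "ideal (PIdl g) R" by (rule cgenideal_ideal[OF g])
  have iG: "ideal (Idl G) R" by (rule genideal_ideal[OF G])
  have "Idl (insert g G) \<subseteq> PIdl g <+>\<^bsub>R\<^esub> Idl G"
  proof (rule genideal_minimal[OF add_ideals[OF iP iG]])
    show "insert g G \<subseteq> PIdl g <+>\<^bsub>R\<^esub> Idl G"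
    proof
      fix y assume "y \<in> insert g G"
      then show "y \<in> PIdl g <+>\<^bsub>R\<^esub> Idl G"
      proof
        assume "y = g"
        then have "y = g \<oplus> \<zero>" using g by simp
        then show ?thesis using cgenideal_self[OF g] additive_subgroup.zero_closed[OF ideal.axioms(1)[OF iG]]
          unfolding set_add_def' by blast
      next
        assume "y \<in> G"
        then have "y = \<zero> \<oplus> y" "y \<in> Idl G" using G genideal_self[OF G] by auto
        then show ?thesis using additive_subgroup.zero_closed[OF ideal.axioms(1)[OF iP]]
          unfolding set_add_def' by blast
      qed
    qed
  qed
  have "ideal_power R (Idl (insert g G)) (m + (card G * m + 1))
      \<subseteq> ideal_power R (PIdl g) m <+>\<^bsub>R\<^esub> ideal_power R (Idl G) (card G * m + 1)"
    using ip_mono[OF \<open>Idl (insert g G) \<subseteq> PIdl g <+>\<^bsub>R\<^esub> Idl G\<close>, of R "m + (card G * m + 1)"]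
      ip_binom[OF assms(1) iP iG, of m "card G * m + 1"] by (rule order_trans)
  also have "\<dots> \<subseteq> K"
  proof -
    have "g [^] m \<in> K" using insert.prems(2) by simp
    then have "PIdl (g [^] m) \<subseteq> K" by (rule cgenideal_minimal[OF assms(2)])
    then have K1: "ideal_power R (PIdl g) m \<subseteq> K"
      using ip_pidl[OF assms(1) g, of m] by (rule order_trans[rotated])
    have K2: "ideal_power R (Idl G) (card G * m + 1) \<subseteq> K"
      using insert.IH G insert.prems(2) by blast
    show ?thesis
    proof
      fix z assume "z \<in> ideal_power R (PIdl g) m <+>\<^bsub>R\<^esub> ideal_power R (Idl G) (card G * m + 1)"
      then obtain z1 z2 where "z1 \<in> ideal_power R (PIdl g) m" "z2 \<in> ideal_power R (Idl G) (card G * m + 1)"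
        "z = z1 \<oplus> z2" unfolding set_add_def' by blast
      then show "z \<in> K" using K1 K2 K.a_closed by blast
    qed
  qed
  finally have fin: "ideal_power R (Idl (insert g G)) (m + (card G * m + 1)) \<subseteq> K" .
  have "card (insert g G) * m + 1 = m + (card G * m + 1)" using insert(1,2) by simp
  then show ?case using fin by metis
qed



lemma ip_hom:
  fixes R (structure)
  assumes "cring R" "h \<in> ring_hom R S" "ideal A R"
  shows "x \<in> ideal_power R A t \<Longrightarrow> h x \<in> ideal_power S (h ` A) t"
proof (induction t arbitrary: x)
  case 0 then show ?case using ring_hom_closed[OF assms(2)] by simp
next
  case (Suc t)
  interpret cring R by fact
  have "x \<in> ideal_prod R A (ideal_power R A t)" using Suc.prems by simp
  then have "h x \<in> ideal_prod S (h ` A) (ideal_power S (h ` A) t)"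
  proof (induct x rule: ideal_prod.induct)
    case (prod i j)
    have ic: "i \<in> carrier R" using prod(1) ideal.Icarr[OF assms(3)] by blast
    have jc: "j \<in> carrier R" using prod(2) ideal.Icarr[OF ip_ideal[OF assms(1,3), of t]] by blast
    have e: "h (i \<otimes> j) = h i \<otimes>\<^bsub>S\<^esub> h j" by (rule ring_hom_mult[OF assms(2) ic jc])
    have "h i \<otimes>\<^bsub>S\<^esub> h j \<in> ideal_prod S (h ` A) (ideal_power S (h ` A) t)"
      by (rule ideal_prod.prod) (use prod(1) Suc.IH[OF prod(2)] in auto)
    then show ?case by (simp only: e)
  next
    case (sum s1 s2)
    have c: "s1 \<in> carrier R" "s2 \<in> carrier R"
      using sum(1) sum(3) ideal_prod_in_carrier[OF assms(3) ip_ideal[OF assms(1,3), of t]] by blast+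
    have e: "h (s1 \<oplus> s2) = h s1 \<oplus>\<^bsub>S\<^esub> h s2" by (rule ring_hom_add[OF assms(2) c])
    have "h s1 \<oplus>\<^bsub>S\<^esub> h s2 \<in> ideal_prod S (h ` A) (ideal_power S (h ` A) t)"
      using sum(2) sum(4) by (rule ideal_prod.sum)
    then show ?case by (simp only: e)
  qed
  then show ?case by simp
qed





lemma lim_mono_conv:
  fixes Qs Ws :: "nat \<Rightarrow> real"
  assumes "convergent Qs" "convergent Ws" "\<And>n. Qs n \<le> Ws n"
  shows "lim Qs \<le> lim Ws"
  using LIMSEQ_le[OF assms(1)[unfolded convergent_LIMSEQ_iff] assms(2)[unfolded convergent_LIMSEQ_iff]] assms(3)
  by blast

lemma bseq_facts:
  fixes R (structure) and M :: nat
  assumes cr: "cring R" and p: "p > 0"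
    and psi: "frob_linear R p 1 \<psi>" "\<psi> \<one> = \<one>"
    and K: "ideal K R" "\<one> \<notin> K"
    and A: "ideal A R" and G: "finite G" "G \<subseteq> carrier R" "A \<subseteq> Idl G"
    and M: "\<forall>g\<in>G. g [^] M \<in> K"
  shows "finite {t. \<not> ideal_power R A t \<subseteq> frob_ideal R p K e}"
    and "0 \<in> {t. \<not> ideal_power R A t \<subseteq> frob_ideal R p K e}"
    and "b_num R p K A e \<le> card G * (M * p ^ e)"
    and "p * b_num R p K A e \<le> b_num R p K A (Suc e)"
proof -
  interpret cring R by (fact cr)
  define S where "S e = {t. \<not> ideal_power R A t \<subseteq> frob_ideal R p K e}" for e
  have Ke: "ideal (frob_ideal R p K e) R" for e by (rule frob_ideal_ideal[OF cr K(1)])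
  have bound_t: "ideal_power R A t \<subseteq> frob_ideal R p K e" if "t \<ge> card G * (M * p ^ e) + 1" for t e
  proof -
    have "ideal_power R A t \<subseteq> ideal_power R A (card G * (M * p ^ e) + 1)"
      by (rule ip_decr[OF cr A that])
    also have "\<dots> \<subseteq> ideal_power R (Idl G) (card G * (M * p ^ e) + 1)"
      by (rule ip_mono[OF G(3)])
    also have "\<dots> \<subseteq> frob_ideal R p K e"
    proof (rule ip_pigeon[OF cr Ke G(1) G(2)])
      show "\<forall>g\<in>G. g [^] (M * p ^ e) \<in> frob_ideal R p K e"
        using pow_in_frob_ideal[OF cr K(1)] M G(2) by blast
    qed
    finally show ?thesis .
  qed
  have Ssub: "S e \<subseteq> {..card G * (M * p ^ e)}" for e
  proof
    fix t assume t: "t \<in> S e"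
    show "t \<in> {..card G * (M * p ^ e)}"
    proof (rule ccontr)
      assume "t \<notin> {..card G * (M * p ^ e)}"
      then have "t \<ge> card G * (M * p ^ e) + 1" by simp
      then have "ideal_power R A t \<subseteq> frob_ideal R p K e" by (rule bound_t)
      with t show False unfolding S_def by simp
    qed
  qed
  have Sfin: "finite (S e)" for e using Ssub finite_subset by blast
  have S0: "0 \<in> S e" for e
  proof -
    have "frob_linear R p e (\<psi> ^^ e) \<and> (\<psi> ^^ e) \<one> = \<one>" by (rule frob_linear_iter[OF cr psi])
    then have "\<one> \<notin> frob_ideal R p K e" using K(2) unfolding frob_ideal_def by auto
    then show ?thesis unfolding S_def by auto
  qed
  have bS: "b_num R p K A e = Max (S e)" for e unfolding b_num_def S_def by simp
  show "finite {t. \<not> ideal_power R A t \<subseteq> frob_ideal R p K e}" using Sfin unfolding S_def .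
  show "0 \<in> {t. \<not> ideal_power R A t \<subseteq> frob_ideal R p K e}" using S0 unfolding S_def .
  show "b_num R p K A e \<le> card G * (M * p ^ e)"
    unfolding bS
  proof (subst Max_le_iff)
    show "finite (S e)" by (rule Sfin)
    show "S e \<noteq> {}" using S0 by blast
    show "\<forall>a\<in>S e. a \<le> card G * (M * p ^ e)" using Ssub[of e] by auto
  qed
  show "p * b_num R p K A e \<le> b_num R p K A (Suc e)"
  proof -
    have "b_num R p K A e \<in> S e" unfolding bS using Sfin S0 by (intro Max_in) auto
    then obtain f where f: "f \<in> ideal_power R A (b_num R p K A e)" "f \<notin> frob_ideal R p K e"
      unfolding S_def by auto
    have fc: "f \<in> carrier R" using f(1) ideal.Icarr[OF ip_ideal[OF cr A]] by blast
    have "f [^] p \<in> ideal_power R A (p * b_num R p K A e)" by (rule ip_pow[OF cr A f(1)])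
    moreover have "f [^] p \<notin> frob_ideal R p K (Suc e)" by (rule frob_step[OF cr psi fc f(2)])
    ultimately have "p * b_num R p K A e \<in> S (Suc e)" unfolding S_def by auto
    then show ?thesis unfolding bS using Sfin by (intro Max_ge) auto
  qed
qed

lemma bseq_convergent:
  fixes R (structure) and M :: nat
  assumes cr: "cring R" and p: "p > 0"
    and psi: "frob_linear R p 1 \<psi>" "\<psi> \<one> = \<one>"
    and K: "ideal K R" "\<one> \<notin> K"
    and A: "ideal A R" and G: "finite G" "G \<subseteq> carrier R" "A \<subseteq> Idl G"
    and M: "\<forall>g\<in>G. g [^] M \<in> K"
  shows "convergent (\<lambda>e. real (b_num R p K A e) / real p ^ e)"
proof -
  note F = bseq_facts[OF assms]
  define Qs where "Qs e = real (b_num R p K A e) / real p ^ e" for e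
  have pp: "real p > 0" using p by simp
  have inc: "incseq Qs"
  proof (rule incseq_SucI)
    fix e
    have "real (p * b_num R p K A e) \<le> real (b_num R p K A (Suc e))" using F(4)[of e] by linarith
    then have "real p * real (b_num R p K A e) \<le> real (b_num R p K A (Suc e))" by simp
    then show "Qs e \<le> Qs (Suc e)" unfolding Qs_def using pp
      by (simp add: field_simps)
  qed
  have bdd: "bdd_above (range Qs)"
  proof (rule bdd_aboveI2)
    fix e
    have "real (b_num R p K A e) \<le> real (card G * (M * p ^ e))" using F(3)[of e] by linarith
    then have "real (b_num R p K A e) \<le> real (card G * M) * real p ^ e" by simp
    then show "Qs e \<le> real (card G * M)" unfolding Qs_def using pp
      by (simp add: field_simps)
  qed
  show ?thesis using LIMSEQ_incseq_SUP[OF bdd inc] unfolding Qs_def convergent_def by blast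
qed




definition desc :: "('a, 'b) ring_scheme \<Rightarrow> 'a set \<Rightarrow> ('a \<Rightarrow> 'a) \<Rightarrow> 'a set \<Rightarrow> 'a set" where
  "desc R P \<phi> U = P +>\<^bsub>R\<^esub> \<phi> (SOME x. x \<in> carrier R \<and> U = P +>\<^bsub>R\<^esub> x)"

lemma cc_ideal:
  fixes R (structure)
  assumes "cring R" "ideal J R"
  shows "ideal (cartier_core R p J) R"
proof -
  interpret cring R by fact
  show ?thesis unfolding cartier_core_def
    by (rule i_Intersect) (use frob_ideal_ideal[OF assms] in auto)
qed

lemma cc_sub:
  fixes R (structure)
  assumes "cring R"
  shows "cartier_core R p J \<subseteq> J"
  using frob_ideal_0[OF assms, of p J] unfolding cartier_core_def by blast

lemma cc_carrier:
  fixes R (structure)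
  shows "cartier_core R p J \<subseteq> carrier R"
  unfolding cartier_core_def frob_ideal_def by blast

lemma cc_compat:
  fixes R (structure)
  assumes cr: "cring R" and phi: "frob_linear R p e \<phi>" and f: "f \<in> cartier_core R p J"
  shows "\<phi> f \<in> cartier_core R p J"
proof -
  have fc: "f \<in> carrier R" using f cc_carrier[of R p J] by blast
  have "\<phi> f \<in> frob_ideal R p J s" for s
  proof -
    have "\<chi> (\<phi> f) \<in> J" if chi: "frob_linear R p s \<chi>" for \<chi>
    proof -
      have "frob_linear R p (e + s) (\<chi> \<circ> \<phi>)" by (rule frob_linear_comp[OF cr chi phi])
      moreover have "f \<in> frob_ideal R p J (e + s)" using f unfolding cartier_core_def by blast
      ultimately show ?thesis unfolding frob_ideal_def by auto
    qed
    then show ?thesis unfolding frob_ideal_def using frob_linearD(1)[OF phi fc] by blast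
  qed
  then show ?thesis unfolding cartier_core_def by blast
qed

lemma quot_carrier:
  fixes R (structure)
  shows "carrier (R Quot P) = (\<lambda>x. P +> x) ` carrier R"
  unfolding FactRing_def A_RCOSETS_def' by auto

lemma desc_eq:
  fixes R (structure)
  assumes cr: "cring R" and P: "ideal P R" and phi: "frob_linear R p e \<phi>"
    and compat: "\<forall>f\<in>P. \<phi> f \<in> P" and x: "x \<in> carrier R"
  shows "desc R P \<phi> (P +> x) = P +> \<phi> x"
proof -
  interpret cring R by fact
  interpret P: ideal P R by fact
  define x' where "x' = (SOME y. y \<in> carrier R \<and> P +> x = P +> y)"
  have "\<exists>y. y \<in> carrier R \<and> P +> x = P +> y" using x by blast
  then have "x' \<in> carrier R \<and> P +> x = P +> x'" unfolding x'_def by (rule someI_ex)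
  then have x': "x' \<in> carrier R" "P +> x = P +> x'" by auto
  have "x' \<in> P +> x" using P.a_rcos_self[OF x'(1)] x'(2) by simp
  then obtain h where h: "h \<in> P" "x' = h \<oplus> x" unfolding a_r_coset_def' by blast
  have hc: "h \<in> carrier R" using h(1) P.Icarr by blast
  have "\<phi> x' = \<phi> h \<oplus> \<phi> x" using frob_linearD(2)[OF phi hc x] h(2) by simp
  moreover have "\<phi> h \<in> P" using compat h(1) by blast
  ultimately have "\<phi> x' \<in> P +> \<phi> x" unfolding a_r_coset_def' by blast
  then have "P +> \<phi> x = P +> \<phi> x'"
    by (rule a_repr_independence) (use frob_linearD(1)[OF phi x] P.a_subgroup in auto)
  then show ?thesis unfolding desc_def x'_def[symmetric] by simp
qed

lemma desc_frob:
  fixes R (structure)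
  assumes cr: "cring R" and hP: "ideal P R" and phi: "frob_linear R p e \<phi>"
    and compat: "\<forall>f\<in>P. \<phi> f \<in> P"
  shows "frob_linear (R Quot P) p e (desc R P \<phi>)"
proof -
  interpret cring R by fact
  interpret P: ideal P R by fact
  have hom: "(\<lambda>x. P +> x) \<in> ring_hom R (R Quot P)" using P.rcos_ring_hom by simp
  have homr: "ring_hom_ring R (R Quot P) (\<lambda>x. P +> x)" using P.rcos_ring_hom_ring by simp
  note de = desc_eq[OF cr hP phi compat]
  note f = frob_linearD[OF phi]
  note qc = quot_carrier[of R P]
  show ?thesis unfolding frob_linear_def
  proof (intro conjI ballI)
    show "desc R P \<phi> \<in> carrier (R Quot P) \<rightarrow> carrier (R Quot P)"
    proof
      fix U assume "U \<in> carrier (R Quot P)"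
      then obtain x where x: "x \<in> carrier R" "U = P +> x" using qc by auto
      then show "desc R P \<phi> U \<in> carrier (R Quot P)" using de[OF x(1)] f(1)[OF x(1)] qc by auto
    qed
  next
    fix U V assume "U \<in> carrier (R Quot P)" "V \<in> carrier (R Quot P)"
    then obtain x y where x: "x \<in> carrier R" "U = P +> x" and y: "y \<in> carrier R" "V = P +> y"
      using qc by auto
    have "U \<oplus>\<^bsub>R Quot P\<^esub> V = P +> (x \<oplus> y)" using ring_hom_add[OF hom x(1) y(1)] x y by simp
    then have "desc R P \<phi> (U \<oplus>\<^bsub>R Quot P\<^esub> V) = P +> \<phi> (x \<oplus> y)" using de x y by simp
    also have "\<dots> = P +> (\<phi> x \<oplus> \<phi> y)" using f(2)[OF x(1) y(1)] by simp
    also have "\<dots> = (P +> \<phi> x) \<oplus>\<^bsub>R Quot P\<^esub> (P +> \<phi> y)"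
      using ring_hom_add[OF hom f(1)[OF x(1)] f(1)[OF y(1)]] by simp
    also have "\<dots> = desc R P \<phi> U \<oplus>\<^bsub>R Quot P\<^esub> desc R P \<phi> V" using de x y by simp
    finally show "desc R P \<phi> (U \<oplus>\<^bsub>R Quot P\<^esub> V) = desc R P \<phi> U \<oplus>\<^bsub>R Quot P\<^esub> desc R P \<phi> V" .
  next
    fix U V assume "U \<in> carrier (R Quot P)" "V \<in> carrier (R Quot P)"
    then obtain x y where x: "x \<in> carrier R" "U = P +> x" and y: "y \<in> carrier R" "V = P +> y"
      using qc by auto
    have "U [^]\<^bsub>R Quot P\<^esub> (p ^ e) = P +> (x [^] (p ^ e))"
      using ring_hom_ring.hom_nat_pow[OF homr x(1)] x by simp
    then have "U [^]\<^bsub>R Quot P\<^esub> (p ^ e) \<otimes>\<^bsub>R Quot P\<^esub> V = P +> (x [^] (p ^ e) \<otimes> y)"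
      using ring_hom_mult[OF hom _ y(1), of "x [^] (p ^ e)"] x y by simp
    then have "desc R P \<phi> (U [^]\<^bsub>R Quot P\<^esub> (p ^ e) \<otimes>\<^bsub>R Quot P\<^esub> V) = P +> \<phi> (x [^] (p ^ e) \<otimes> y)"
      using de[of "x [^] (p ^ e) \<otimes> y"] x y by simp
    also have "\<dots> = P +> (x \<otimes> \<phi> y)" using f(3)[OF x(1) y(1)] by simp
    also have "\<dots> = (P +> x) \<otimes>\<^bsub>R Quot P\<^esub> (P +> \<phi> y)"
      using ring_hom_mult[OF hom x(1) f(1)[OF y(1)]] by simp
    also have "\<dots> = U \<otimes>\<^bsub>R Quot P\<^esub> desc R P \<phi> V" using de y x by simp
    finally show "desc R P \<phi> (U [^]\<^bsub>R Quot P\<^esub> (p ^ e) \<otimes>\<^bsub>R Quot P\<^esub> V) = U \<otimes>\<^bsub>R Quot P\<^esub> desc R P \<phi> V" .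
  qed
qed




lemma fi_carrier:
  "frob_ideal R p (carrier R) e = carrier R"
  unfolding frob_ideal_def frob_linear_def by auto

lemma main_ct:
  fixes R (structure)
  assumes cr: "cring R" and noeth: "noetherian_ring R" and p: "p > 0"
    and fp: "F_pure R p" and a: "ideal a R" and J: "ideal J R" and rad: "a \<subseteq> rad_ideal R J"
  shows "crit_thr R p J a \<le> crit_thr (R Quot (cartier_core R p J)) p
                (quot_image R (cartier_core R p J) J) (quot_image R (cartier_core R p J) a)"
proof -
  interpret cring R by fact
  interpret JI: ideal J R by fact
  interpret aI: ideal a R by fact
  define P where "P = cartier_core R p J"
  define Rq where "Rq = R Quot P"
  define Jq where "Jq = (\<lambda>x. P +> x) ` J"
  define aq where "aq = (\<lambda>x. P +> x) ` a"
  have hP: "ideal P R" unfolding P_def by (rule cc_ideal[OF cr J])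
  interpret PI: ideal P R by (rule hP)
  have PJ: "P \<subseteq> J" unfolding P_def by (rule cc_sub[OF cr])
  have crq: "cring Rq" unfolding Rq_def by (rule PI.quotient_is_cring[OF cr])
  interpret Q: cring Rq by (rule crq)
  have hom: "(\<lambda>x. P +> x) \<in> ring_hom R Rq" unfolding Rq_def using PI.rcos_ring_hom by simp
  have homr: "ring_hom_ring R Rq (\<lambda>x. P +> x)" unfolding Rq_def using PI.rcos_ring_hom_ring by simp
  have qc: "carrier Rq = (\<lambda>x. P +> x) ` carrier R" unfolding Rq_def by (rule quot_carrier)
  have Jqi: "ideal Jq Rq" unfolding Jq_def Rq_def by (rule ring_ideal_imp_quot_ideal[OF hP J])
  have aqi: "ideal aq Rq" unfolding aq_def Rq_def by (rule ring_ideal_imp_quot_ideal[OF hP a])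
  have bad: "y \<in> J" if y: "P +> y \<in> Jq" "y \<in> carrier R" for y
  proof -
    obtain j where j: "j \<in> J" "P +> y = P +> j" using y(1) unfolding Jq_def by blast
    have "y \<in> P +> j" using PI.a_rcos_self[OF y(2)] j(2) by simp
    then obtain h where h: "h \<in> P" "y = h \<oplus> j" unfolding a_r_coset_def' by blast
    then show ?thesis using PJ j(1) JI.a_closed by blast
  qed
  obtain \<psi> where psi: "frob_linear R p 1 \<psi>" "\<psi> \<one> = \<one>" using fp unfolding F_pure_def by blast
  have compat: "\<forall>f\<in>P. \<phi> f \<in> P" if "frob_linear R p e \<phi>" for \<phi> e
    unfolding P_def using cc_compat[OF cr that] by blast
  have descf: "frob_linear Rq p e (desc R P \<phi>)" if "frob_linear R p e \<phi>" for \<phi> e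
    unfolding Rq_def by (rule desc_frob[OF cr hP that compat[OF that]])
  have desce: "desc R P \<phi> (P +> x) = P +> \<phi> x" if "frob_linear R p e \<phi>" "x \<in> carrier R" for \<phi> e x
    by (rule desc_eq[OF cr hP that(1) compat[OF that(1)] that(2)])
  have oneq: "\<one>\<^bsub>Rq\<^esub> = P +> \<one>" unfolding Rq_def FactRing_def by simp
  have psiq: "frob_linear Rq p 1 (desc R P \<psi>)" "desc R P \<psi> \<one>\<^bsub>Rq\<^esub> = \<one>\<^bsub>Rq\<^esub>"
    using descf[OF psi(1)] desce[OF psi(1), of \<one>] psi(2) oneq by simp_all
  obtain G where G: "G \<subseteq> carrier R" "finite G" "a = Idl G"
    using noetherian_ring.finetely_gen[OF noeth a] by blast
  have "\<forall>g\<in>G. \<exists>n. g [^] (n::nat) \<in> J"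
    using rad G(3) genideal_self[OF G(1)] unfolding rad_ideal_def by blast
  then obtain nf where nf: "\<forall>g\<in>G. g [^] (nf g :: nat) \<in> J" by metis
  define M where "M = (\<Sum>g\<in>G. nf g)"
  have MJ: "\<forall>g\<in>G. g [^] M \<in> J"
  proof
    fix g assume g: "g \<in> G"
    have le: "nf g \<le> M" unfolding M_def using G(2) g by (intro member_le_sum) auto
    have gc: "g \<in> carrier R" using g G(1) by blast
    have "g [^] M = g [^] nf g \<otimes> g [^] (M - nf g)"
      using nat_pow_mult[OF gc, of "nf g" "M - nf g"] le by simp
    then show "g [^] M \<in> J" using nf g gc JI.I_r_closed by simp
  qed
  define Gq where "Gq = (\<lambda>x. P +> x) ` G"
  have Gq: "finite Gq" "Gq \<subseteq> carrier Rq" using G qc unfolding Gq_def by auto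
  have aqG: "aq \<subseteq> Idl\<^bsub>Rq\<^esub> Gq"
  proof -
    have idl: "ideal (Idl\<^bsub>Rq\<^esub> Gq) Rq" by (rule Q.genideal_ideal[OF Gq(2)])
    have vi: "ideal {r \<in> carrier R. P +> r \<in> Idl\<^bsub>Rq\<^esub> Gq} R"
      by (rule ring_hom_ring.ideal_vimage[OF homr idl])
    have "G \<subseteq> {r \<in> carrier R. P +> r \<in> Idl\<^bsub>Rq\<^esub> Gq}"
      using G(1) Q.genideal_self[OF Gq(2)] unfolding Gq_def by auto
    then have "Idl G \<subseteq> {r \<in> carrier R. P +> r \<in> Idl\<^bsub>Rq\<^esub> Gq}" by (rule genideal_minimal[OF vi])
    then show ?thesis unfolding aq_def using G(3) by auto
  qed
  have MJq: "\<forall>g\<in>Gq. g [^]\<^bsub>Rq\<^esub> M \<in> Jq"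
  proof
    fix u assume "u \<in> Gq"
    then obtain g where g: "g \<in> G" "u = P +> g" unfolding Gq_def by blast
    have "u [^]\<^bsub>Rq\<^esub> M = P +> (g [^] M)"
      using ring_hom_ring.hom_nat_pow[OF homr, of g M] g G(1) by auto
    then show "u [^]\<^bsub>Rq\<^esub> M \<in> Jq" using MJ g(1) unfolding Jq_def by blast
  qed
  have main: "crit_thr R p J a \<le> crit_thr Rq p Jq aq"
  proof (cases "J = carrier R")
    case True
    have "b_num R p J a e = b_num Rq p Jq aq e" for e
    proof -
      have "{t. \<not> ideal_power R a t \<subseteq> frob_ideal R p J e} = {}"
        using True fi_carrier[of R p e] ideal.Icarr[OF ip_ideal[OF cr a]] by blast
      moreover have "Jq = carrier Rq" unfolding Jq_def qc True by simp
      then have "{t. \<not> ideal_power Rq aq t \<subseteq> frob_ideal Rq p Jq e} = {}"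
        using fi_carrier[of Rq p e] ideal.Icarr[OF ip_ideal[OF crq aqi]] by blast
      ultimately show ?thesis unfolding b_num_def by simp
    qed
    then show ?thesis unfolding crit_thr_def by simp
  next
    case False
    have one: "\<one> \<notin> J" using False JI.one_imp_carrier by blast
    have oneq': "\<one>\<^bsub>Rq\<^esub> \<notin> Jq" using bad[of \<one>] one oneq by auto
    have aG: "a \<subseteq> Idl G" using G(3) by simp
    note FR = bseq_facts[OF cr p psi J one a G(2) G(1) aG MJ]
    note FQ = bseq_facts[OF crq p psiq Jqi oneq' aqi Gq(1) Gq(2) aqG MJq]
    note CR = bseq_convergent[OF cr p psi J one a G(2) G(1) aG MJ]
    note CQ = bseq_convergent[OF crq p psiq Jqi oneq' aqi Gq(1) Gq(2) aqG MJq]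
    have le: "b_num R p J a e \<le> b_num Rq p Jq aq e" for e
    proof -
      have sub: "{t. \<not> ideal_power R a t \<subseteq> frob_ideal R p J e}
          \<subseteq> {t. \<not> ideal_power Rq aq t \<subseteq> frob_ideal Rq p Jq e}"
      proof
        fix t assume "t \<in> {t. \<not> ideal_power R a t \<subseteq> frob_ideal R p J e}"
        then obtain f where f: "f \<in> ideal_power R a t" "f \<notin> frob_ideal R p J e" by auto
        have fc: "f \<in> carrier R" using f(1) ideal.Icarr[OF ip_ideal[OF cr a]] by blast
        obtain \<phi> where phi: "frob_linear R p e \<phi>" "\<phi> f \<notin> J"
          using f(2) fc unfolding frob_ideal_def by auto
        have in1: "P +> f \<in> ideal_power Rq aq t" unfolding aq_def by (rule ip_hom[OF cr hom a f(1)])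
        have "P +> f \<notin> frob_ideal Rq p Jq e"
        proof
          assume "P +> f \<in> frob_ideal Rq p Jq e"
          then have "desc R P \<phi> (P +> f) \<in> Jq" using descf[OF phi(1)] unfolding frob_ideal_def by blast
          then have "P +> \<phi> f \<in> Jq" using desce[OF phi(1) fc] by simp
          then have "\<phi> f \<in> J" using bad frob_linearD(1)[OF phi(1) fc] by blast
          then show False using phi(2) by simp
        qed
        then show "t \<in> {t. \<not> ideal_power Rq aq t \<subseteq> frob_ideal Rq p Jq e}" using in1 by auto
      qed
      show ?thesis unfolding b_num_def
      proof (rule Max_mono[OF sub])
        show "{t. \<not> ideal_power R a t \<subseteq> frob_ideal R p J e} \<noteq> {}" using FR(2)[of e] by blast
        show "finite {t. \<not> ideal_power Rq aq t \<subseteq> frob_ideal Rq p Jq e}" by (rule FQ(1))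
      qed
    qed
    show ?thesis unfolding crit_thr_def
    proof (rule lim_mono_conv[OF CR CQ])
      fix e
      show "real (b_num R p J a e) / real p ^ e \<le> real (b_num Rq p Jq aq e) / real p ^ e"
        using le[of e] by (simp add: divide_right_mono)
    qed
  qed
  show ?thesis using main unfolding Rq_def Jq_def aq_def P_def quot_image_def by simp
qed


theorem mainTheorem16:
  fixes R :: "('a, 'b) ring_scheme" and p :: nat and a J :: "'a set"
  assumes "cring R" and "noetherian_ring R"
    and "Factorial_Ring.prime p" and "add_pow R p \<one>\<^bsub>R\<^esub> = \<zero>\<^bsub>R\<^esub>"
    and "F_finite R p" and "F_pure R p"
    and "ideal a R" and "ideal J R" and "a \<subseteq> rad_ideal R J"
  shows "(crit_thr R p J a
           \<le> crit_thr (R Quot (cartier_core R p J)) p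
                (quot_image R (cartier_core R p J) J)
                (quot_image R (cartier_core R p J) a))
         \<and> (\<forall>m. maximalideal m R \<and> (\<forall>I. maximalideal I R \<longrightarrow> I = m) \<and> a \<subseteq> m \<longrightarrow>
           fpt R p m a
           \<le> fpt (R Quot (cartier_core R p m)) p
                (quot_image R (cartier_core R p m) m)
                (quot_image R (cartier_core R p m) a))"
  proof -
  have p0: "p > 0" using assms(3) by (simp add: prime_gt_0_nat)
  have part1: "crit_thr R p J a
           \<le> crit_thr (R Quot (cartier_core R p J)) p
                (quot_image R (cartier_core R p J) J)
                (quot_image R (cartier_core R p J) a)"
    by (rule main_ct[OF assms(1,2) p0 assms(6,7,8,9)])
  have part2: "\<forall>m. maximalideal m R \<and> (\<forall>I. maximalideal I R \<longrightarrow> I = m) \<and> a \<subseteq> m \<longrightarrow>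
           fpt R p m a
           \<le> fpt (R Quot (cartier_core R p m)) p
                (quot_image R (cartier_core R p m) m)
                (quot_image R (cartier_core R p m) a)"
  proof (intro allI impI)
    fix m assume h: "maximalideal m R \<and> (\<forall>I. maximalideal I R \<longrightarrow> I = m) \<and> a \<subseteq> m"
    interpret cring R by (rule assms(1))
    have mi: "ideal m R" using h maximalideal.axioms(1) by blast
    have rad: "a \<subseteq> rad_ideal R m"
    proof
      fix x assume x: "x \<in> a"
      then have xm: "x \<in> m" using h by blast
      then have xc: "x \<in> carrier R" using ideal.Icarr[OF mi] by blast
      have "x [^]\<^bsub>R\<^esub> (1::nat) \<in> m" using xm xc by simp
      then show "x \<in> rad_ideal R m" unfolding rad_ideal_def using xc by blast
    qed
    show "fpt R p m a
           \<le> fpt (R Quot (cartier_core R p m)) p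
                (quot_image R (cartier_core R p m) m)
                (quot_image R (cartier_core R p m) a)"
      unfolding fpt_def by (rule main_ct[OF assms(1,2) p0 assms(6,7) mi rad])
  qed
  show ?thesis using part1 part2 by blast
qed

end
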